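(* Let $k\ge1$, $n\ge 2k+1$ and $x\in X_{n,k}$. Then $d(f(x))=d(x)$; hence the number of descents is the same for all strings on the cycle $C(x)=(x,f(x),f^2(x),\dots)$.
   Context: $X_{n,k}$ is the set of binary strings of length $n$ with exactly $k$ ones, positions taken cyclically modulo $n$. Cyclic parenthesis matching: regard $x$ as cyclic, $1$s as opening and $0$s as closing brackets; each $1$ at position $i$ is matched to the last $0$ of the shortest cyclic substring starting at $i$ going right that contains equally many $0$s and $1$s (every $1$ is matched; $n-2k$ zeros are unmatched). $f(x)$ is obtained from $x$ by complementing all matched bits. $d(x)$ is the number of cyclic descents of $x$, i.e. the number of positions $i\in[n]$ with $x_i=1$ and $x_{i+1}=0$ (indices mod $n$). *)

theory Defs
  imports Main
begin

text \<open>Binary strings are bool lists (True = 1, False = 0), indexed 0..n-1, read cyclically.\<close>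

definition Xnk :: "nat \<Rightarrow> nat \<Rightarrow> bool list set" where
  "Xnk n k = {x. length x = n \<and> count_list x True = k}"

definition cbit :: "bool list \<Rightarrow> nat \<Rightarrow> bool" where
  "cbit x i = x ! (i mod length x)"

definition ones_in :: "bool list \<Rightarrow> nat \<Rightarrow> nat \<Rightarrow> nat" where
  "ones_in x i L = card {t. t < L \<and> cbit x (i + t)}"

definition match_len :: "bool list \<Rightarrow> nat \<Rightarrow> nat" where
  "match_len x i = (LEAST L. 0 < L \<and> 2 * ones_in x i L = L)"

text \<open>position of the 0 matched to the 1 at position i\<close>
definition partner :: "bool list \<Rightarrow> nat \<Rightarrow> nat" where
  "partner x i = (i + match_len x i - 1) mod length x"

definition matched :: "bool list \<Rightarrow> nat \<Rightarrow> bool" where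
  "matched x j = (x ! j \<or> (\<exists>i < length x. x ! i \<and> partner x i = j))"

definition flip :: "bool list \<Rightarrow> bool list" where
  "flip x = map (\<lambda>j. if matched x j then \<not> x ! j else x ! j) [0..<length x]"

definition descents :: "bool list \<Rightarrow> nat" where
  "descents x = card {i. i < length x \<and> x ! i \<and> \<not> cbit x (i + 1)}"

end

theory Submission
  imports Defs
begin

lemma mod_suc_cancel:
  assumes "n > 0" "(a + 1) mod n = (b + 1) mod (n::nat)"
  shows "a mod n = b mod n"
proof -
  have "a mod n = (a + 1 + (n - 1)) mod n" using assms(1) by simp
  also have "\<dots> = ((a + 1) mod n + (n - 1)) mod n" by (simp add: mod_add_left_eq)
  also have "\<dots> = ((b + 1) mod n + (n - 1)) mod n" using assms(2) by simp
  also have "\<dots> = (b + 1 + (n - 1)) mod n" by (simp add: mod_add_left_eq)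
  also have "\<dots> = b mod n" using assms(1) by simp
  finally show ?thesis .
qed

lemma ones_Suc:
  "ones_in x i (Suc L) = ones_in x i L + (if cbit x (i + L) then 1 else 0)"
proof -
  have "{t. t < Suc L \<and> cbit x (i + t)} =
        {t. t < L \<and> cbit x (i + t)} \<union> (if cbit x (i + L) then {L} else {})"
    by (auto simp: less_Suc_eq)
  then show ?thesis unfolding ones_in_def by (simp add: card_insert_if)
qed

lemma ones_0[simp]: "ones_in x i 0 = 0"
  unfolding ones_in_def by simp

lemma ones_add:
  "ones_in x i (a + b) = ones_in x i a + ones_in x (i + a) b"
  by (induction b) (simp_all add: ones_Suc add.assoc)

lemma cbit_mod: "cbit x (a mod length x + b) = cbit x (a + b)"
  unfolding cbit_def by (simp add: mod_add_left_eq)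

lemma ones_mod: "ones_in x (a mod length x) L = ones_in x a L"
  unfolding ones_in_def by (simp add: cbit_mod)

lemma ones_le: "ones_in x i L \<le> L"
proof -
  have "card {t. t < L \<and> cbit x (i + t)} \<le> card {..<L}"
    by (rule card_mono) auto
  then show ?thesis unfolding ones_in_def by simp
qed

lemma ones_full:
  assumes "length x > 0"
  shows "ones_in x i (length x) = count_list x True"
proof -
  let ?n = "length x"
  have base: "ones_in x 0 ?n = count_list x True"
  proof -
    have "{t. t < ?n \<and> cbit x (0 + t)} = {t. t < ?n \<and> x ! t}"
      unfolding cbit_def by auto
    then show ?thesis unfolding ones_in_def
      by (simp add: count_list_eq_length_filter length_filter_conv_card)
  qed
  have "ones_in x 0 (i + ?n) = ones_in x 0 i + ones_in x i ?n"
    using ones_add[of x 0 i ?n] by simp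
  moreover have "ones_in x 0 (?n + i) = ones_in x 0 ?n + ones_in x ?n i"
    using ones_add[of x 0 ?n i] by simp
  moreover have "ones_in x ?n i = ones_in x 0 i"
    using ones_mod[of x ?n i] by simp
  ultimately show ?thesis using base by (simp add: add.commute)
qed

lemma match_props:
  assumes n: "length x > 0" and c: "2 * count_list x True \<le> length x"
    and xi: "cbit x i"
  shows "0 < match_len x i \<and> 2 * ones_in x i (match_len x i) = match_len x i
     \<and> (\<forall>L'. 0 < L' \<and> L' < match_len x i \<longrightarrow> 2 * ones_in x i L' \<noteq> L')"
proof -
  let ?P = "\<lambda>L. 0 < L \<and> 2 * ones_in x i L \<le> L"
  have Pn: "?P (length x)" using n c ones_full[OF n, of i] by simp
  define L0 where "L0 = (LEAST L. ?P L)"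
  have PL0: "?P L0" unfolding L0_def using Pn by (rule LeastI)
  have o1: "ones_in x i 1 = 1" using ones_Suc[of x i 0] xi by simp
  have "L0 \<noteq> 1" using PL0 o1 by auto
  then have L02: "L0 \<ge> 2" using PL0 by linarith
  have "\<not> ?P (L0 - 1)" unfolding L0_def
    by (rule not_less_Least) (use L02 L0_def in auto)
  then have a: "2 * ones_in x i (L0 - 1) > L0 - 1" using L02 by auto
  have "ones_in x i L0 \<ge> ones_in x i (L0 - 1)"
    using ones_Suc[of x i "L0 - 1"] L02 by (simp add: Suc_diff_Suc numeral_2_eq_2)
  then have eq: "2 * ones_in x i L0 = L0" using a PL0 by linarith
  let ?Q = "\<lambda>L. 0 < L \<and> 2 * ones_in x i L = L"
  have ex: "?Q L0" using eq PL0 by simp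
  have "?Q (match_len x i)" unfolding match_len_def using ex by (rule LeastI)
  moreover have "\<forall>L'. 0 < L' \<and> L' < match_len x i \<longrightarrow> 2 * ones_in x i L' \<noteq> L'"
    unfolding match_len_def using not_less_Least by blast
  ultimately show ?thesis by blast
qed

lemma key:
  assumes n: "length y > 0" and c: "2 * count_list y True \<le> length y"
    and i: "i < length y" "y ! i" and j: "j < length y" "\<not> y ! j"
    and j1: "\<not> y ! ((j + 1) mod length y)"
    and p: "partner y i = (j + 1) mod length y"
  shows "\<exists>i' < length y. y ! i' \<and> partner y i' = j"
proof -
  let ?n = "length y"
  define L where "L = match_len y i"
  have ci: "cbit y i" using i unfolding cbit_def by simp
  have mp: "0 < L" "2 * ones_in y i L = L"
      "\<And>L'. 0 < L' \<Longrightarrow> L' < L \<Longrightarrow> 2 * ones_in y i L' \<noteq> L'"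
    using match_props[OF n c ci] unfolding L_def by auto
  have o1: "ones_in y i 1 = 1" using ones_Suc[of y i 0] ci by simp
  have L2: "L \<ge> 2" using mp(1,2) o1 by (cases "L = 1") auto
  have pe: "(i + L - 1) mod ?n = (j + 1) mod ?n" using p unfolding partner_def L_def by simp
  have c1: "\<not> cbit y (i + (L - 1))"
    using pe j1 L2 unfolding cbit_def by (simp add: add.commute)
  have "i + (L - 2) + 1 = i + L - 1" using L2 by simp
  then have "(i + (L - 2) + 1) mod ?n = (j + 1) mod ?n" using pe by (simp only:)
  then have "(i + (L - 2)) mod ?n = j mod ?n" by (rule mod_suc_cancel[OF n])
  then have jm: "(i + (L - 2)) mod ?n = j" using j by simp
  have c2: "\<not> cbit y (i + (L - 2))" using jm j unfolding cbit_def by simp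
  have "ones_in y i L = ones_in y i (L - 1)"
    using ones_Suc[of y i "L - 1"] c1 L2 by (simp add: Suc_diff_le[symmetric])
  moreover have "ones_in y i (L - 1) = ones_in y i (L - 2)"
  proof -
    have "L - 1 = Suc (L - 2)" using L2 by simp
    then show ?thesis using ones_Suc[of y i "L - 2"] c2 by simp
  qed
  ultimately have e2: "2 * ones_in y i (L - 2) = L" and e1: "2 * ones_in y i (L - 1) = L"
    using mp(2) by auto
  have "L \<noteq> 2" using e2 by auto
  moreover have "L \<noteq> 3" using e2 o1 by auto
  ultimately have L4: "L \<ge> 4" using L2 by linarith
  define A where "A = {s. s < L - 2 \<and> 2 * ones_in y i s = s + 1}"
  have finA: "finite A" unfolding A_def by simp
  have "1 \<in> A" unfolding A_def using o1 L4 by simp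
  define t where "t = Max A"
  have tA: "t \<in> A" unfolding t_def using finA \<open>1 \<in> A\<close> by (metis Max_in empty_iff)
  have tmax: "\<And>s. s \<in> A \<Longrightarrow> s \<le> t" unfolding t_def using finA by simp
  have tl: "t < L - 2" and te: "2 * ones_in y i t = t + 1" using tA unfolding A_def by auto
  have ct: "cbit y (i + t)"
  proof (rule ccontr)
    assume "\<not> cbit y (i + t)"
    then have "2 * ones_in y i (Suc t) = Suc t" using ones_Suc[of y i t] te by simp
    moreover have "Suc t < L" using tl by simp
    ultimately show False using mp(3)[of "Suc t"] by simp
  qed
  define i' where "i' = (i + t) mod ?n"
  have i'n: "i' < ?n" unfolding i'_def using n by simp
  have yi': "y ! i'" using ct unfolding i'_def cbit_def by simp
  have oi': "\<And>u. ones_in y i' u = ones_in y (i + t) u" unfolding i'_def by (rule ones_mod)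
  have split: "\<And>u. ones_in y i (t + u) = ones_in y i t + ones_in y i' u"
    using ones_add oi' by simp
  define M where "M = L - 1 - t"
  have ml: "match_len y i' = M"
    unfolding match_len_def
  proof (rule Least_equality)
    have "ones_in y i (L - 1) = ones_in y i t + ones_in y i' M"
      using split[of M] tl unfolding M_def by simp
    then show "0 < M \<and> 2 * ones_in y i' M = M"
      using e1 te tl unfolding M_def by auto
  next
    fix u assume u: "0 < u \<and> 2 * ones_in y i' u = u"
    show "M \<le> u"
    proof (rule ccontr)
      assume "\<not> M \<le> u"
      then have us: "t + u \<le> L - 2" unfolding M_def by simp
      have h: "2 * ones_in y i (t + u) = t + u + 1" using split[of u] u te by simp
      show False
      proof (cases "t + u = L - 2")
        case True then show ?thesis using h e2 L4 by simp
      next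
        case False
        then have "t + u \<in> A" unfolding A_def using us h by simp
        then show ?thesis using tmax u by fastforce
      qed
    qed
  qed
  have mm: "i' + M - 1 = i' + (L - 2 - t)" unfolding M_def using tl by simp
  have "partner y i' = (i' + (L - 2 - t)) mod ?n" unfolding partner_def ml mm by simp
  also have "\<dots> = (i + t + (L - 2 - t)) mod ?n" unfolding i'_def by (simp add: mod_add_left_eq)
  also have "i + t + (L - 2 - t) = i + (L - 2)" using tl by simp
  finally have "partner y i' = j" using jm by simp
  then show ?thesis using i'n yi' by blast
qed

lemma card_sum: "card {j. j < (n::nat) \<and> P j} = (\<Sum>j<n. if P j then 1 else 0::nat)"
proof (induction n)
  case 0 then show ?case by simp
next
  case (Suc n)
  have "{j. j < Suc n \<and> P j} = {j. j < n \<and> P j} \<union> (if P n then {n} else {})"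
    by (auto simp: less_Suc_eq)
  then show ?case using Suc by (simp add: card_insert_if)
qed

lemma sum_shift:
  fixes n :: nat and g :: "nat \<Rightarrow> nat"
  assumes "n > 0"
  shows "(\<Sum>j<n. g ((j + 1) mod n)) = (\<Sum>j<n. g j)"
proof -
  obtain m where m: "n = Suc m" using assms by (cases n) auto
  have "(\<Sum>j<Suc m. g ((j + 1) mod Suc m)) = (\<Sum>j<m. g ((j + 1) mod Suc m)) + g 0"
    by simp
  also have "(\<Sum>j<m. g ((j + 1) mod Suc m)) = (\<Sum>j<m. g (Suc j))"
    by (rule sum.cong) auto
  also have "(\<Sum>j<m. g (Suc j)) + g 0 = (\<Sum>j<Suc m. g j)"
    by (subst sum.lessThan_Suc_shift) simp
  finally show ?thesis using m by simp
qed

lemma cyc: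
  fixes n :: nat
  assumes "n > 0"
  shows "card {j. j < n \<and> f j \<and> \<not> f ((j + 1) mod n)} =
         card {j. j < n \<and> \<not> f j \<and> f ((j + 1) mod n)}"
proof -
  have pw: "\<And>j. (if f j \<and> \<not> f ((j + 1) mod n) then 1 else 0) + (if f ((j + 1) mod n) then 1 else 0)
      = (if \<not> f j \<and> f ((j + 1) mod n) then 1 else 0) + (if f j then 1 else (0::nat))"
    by auto
  have "(\<Sum>j<n. if f j \<and> \<not> f ((j + 1) mod n) then 1 else 0) + (\<Sum>j<n. if f ((j + 1) mod n) then 1 else 0)
      = (\<Sum>j<n. if \<not> f j \<and> f ((j + 1) mod n) then 1 else 0) + (\<Sum>j<n. if f j then 1 else (0::nat))"
    unfolding sum.distrib[symmetric] using pw by simp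
  moreover have "(\<Sum>j<n. if f ((j + 1) mod n) then 1 else 0) = (\<Sum>j<n. if f j then 1 else (0::nat))"
    using sum_shift[OF assms, of "\<lambda>j. if f j then 1 else 0"] by simp
  ultimately show ?thesis unfolding card_sum by simp
qed

lemma desc_partner:
  assumes n: "length y > 0" and j: "j < length y" "y ! j" "\<not> y ! ((j + 1) mod length y)"
  shows "partner y j = (j + 1) mod length y"
proof -
  have c0: "cbit y (j + 0)" using j unfolding cbit_def by simp
  have c1: "\<not> cbit y (j + 1)" using j unfolding cbit_def by simp
  have o1: "ones_in y j 1 = 1" using ones_Suc[of y j 0] c0 by simp
  have o2: "ones_in y j 2 = 1" using ones_Suc[of y j 1] c1 o1 by (simp add: numeral_2_eq_2)
  have "match_len y j = 2" unfolding match_len_def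
  proof (rule Least_equality)
    show "0 < (2::nat) \<and> 2 * ones_in y j 2 = 2" using o2 by simp
  next
    fix u assume "0 < u \<and> 2 * ones_in y j u = u"
    then show "2 \<le> u" using o1 by (cases "u = 1") auto
  qed
  then show ?thesis unfolding partner_def by simp
qed

definition Mf :: "bool list \<Rightarrow> nat \<Rightarrow> bool" where
  "Mf y j = (\<not> y ! j \<and> (\<exists>i<length y. y ! i \<and> partner y i = j))"

lemma flip_len[simp]: "length (flip y) = length y"
  unfolding flip_def by simp

lemma flip_nth: "j < length y \<Longrightarrow> flip y ! j = Mf y j"
  unfolding flip_def Mf_def matched_def by auto

lemma flip_count:
  assumes "length y > 0"
  shows "count_list (flip y) True \<le> count_list y True"
proof -
  have e: "{j. j < length y \<and> flip y ! j} = {j. j < length y \<and> Mf y j}"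
    using flip_nth by auto
  have "count_list (flip y) True = card {j. j < length y \<and> Mf y j}"
    by (simp add: count_list_eq_length_filter length_filter_conv_card e[symmetric])
  also have "\<dots> \<le> card (partner y ` {i. i < length y \<and> y ! i})"
    by (rule card_mono) (auto simp: Mf_def)
  also have "\<dots> \<le> card {i. i < length y \<and> y ! i}" by (rule card_image_le) simp
  also have "\<dots> = count_list y True"
    by (simp add: count_list_eq_length_filter length_filter_conv_card)
  finally show ?thesis .
qed

lemma desc_flip:
  assumes n: "length y > 0" and c: "2 * count_list y True \<le> length y"
  shows "descents (flip y) = descents y"
proof -
  let ?n = "length y"
  have "descents (flip y) = card {i. i < ?n \<and> Mf y i \<and> \<not> Mf y ((i + 1) mod ?n)}"
    unfolding descents_def cbit_def using n
    by (intro arg_cong[where f=card]) (auto simp: flip_nth)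
  also have "\<dots> = card {i. i < ?n \<and> \<not> Mf y i \<and> Mf y ((i + 1) mod ?n)}"
    by (rule cyc[OF n])
  also have "\<dots> = card {i. i < ?n \<and> y ! i \<and> \<not> y ! ((i + 1) mod ?n)}"
  proof (rule arg_cong[where f=card], rule Collect_cong, rule iffI)
    fix i assume a: "i < ?n \<and> \<not> Mf y i \<and> Mf y ((i + 1) mod ?n)"
    then have i: "i < ?n" and nm: "\<not> Mf y i" and m1: "Mf y ((i + 1) mod ?n)" by auto
    obtain i0 where i0: "i0 < ?n" "y ! i0" "partner y i0 = (i + 1) mod ?n"
      and z: "\<not> y ! ((i + 1) mod ?n)" using m1 unfolding Mf_def by auto
    have "y ! i"
    proof (rule ccontr)
      assume ni: "\<not> y ! i"
      from key[OF n c i0(1,2) i ni z i0(3)] have "Mf y i" using ni unfolding Mf_def by blast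
      then show False using nm by simp
    qed
    then show "i < ?n \<and> y ! i \<and> \<not> y ! ((i + 1) mod ?n)" using i z by simp
  next
    fix i assume a: "i < ?n \<and> y ! i \<and> \<not> y ! ((i + 1) mod ?n)"
    then have "partner y i = (i + 1) mod ?n" using desc_partner[OF n] by blast
    moreover have "(i + 1) mod ?n < ?n" using n by simp
    ultimately have "Mf y ((i + 1) mod ?n)" using a unfolding Mf_def by blast
    then show "i < ?n \<and> \<not> Mf y i \<and> Mf y ((i + 1) mod ?n)" using a unfolding Mf_def by simp
  qed
  also have "\<dots> = descents y" unfolding descents_def cbit_def by simp
  finally show ?thesis .
qed

theorem mainTheorem7:
  fixes n k :: nat and x :: "bool list"
  assumes "k \<ge> 1" and "n \<ge> 2 * k + 1" and "x \<in> Xnk n k"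
  shows "descents (flip x) = descents x \<and> (\<forall>m. descents ((flip ^^ m) x) = descents x)"
proof -
  have lx: "length x = n" and cx: "count_list x True = k" using assms(3) unfolding Xnk_def by auto
  have n0: "n > 0" using assms(2) by simp
  have inv: "length ((flip ^^ m) x) = n \<and> 2 * count_list ((flip ^^ m) x) True \<le> n
      \<and> descents ((flip ^^ m) x) = descents x" for m
  proof (induction m)
    case 0 then show ?case using lx cx assms(2) by simp
  next
    case (Suc m)
    let ?y = "(flip ^^ m) x"
    have l: "length ?y = n" and c: "2 * count_list ?y True \<le> n" and d: "descents ?y = descents x"
      using Suc by auto
    have "count_list (flip ?y) True \<le> count_list ?y True" using flip_count[of ?y] l n0 by simp
    moreover have "descents (flip ?y) = descents ?y" using desc_flip[of ?y] l c n0 by simp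
    ultimately show ?case using l c d by simp
  qed
  have "descents (flip x) = descents x" using inv[of 1] by simp
  then show ?thesis using inv by blast
qed

end
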